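(* Let $D$, $i$, $j$, $s$ be integers with $0\le i<j\le D$ and $s\ge1$, and let $D-j=i_s<i_{s-1}<\dots<i_0=D-i$ be integers. Then \[\prod_{r=0}^{s-1}c_{i_r,-i_{r+1}}\le\max(T_1,T_2,T_2',T_3,T_3',T_4),\] where (with $0^0=1$) \begin{align*} T_1&=(1728-e^{2\pi})^{j-i}s^{j-i}\frac{(D-i)^{D-i}}{(D-j)^{D-j}(j-i)^{j-i}},& T_2&=2981^{D-i}\,1.25^{D-j},& T_2'&=(2393s)^{D-i}\,1.45^{j-i},\\ T_3&=(2386s)^{D-i}\,2924^{-(D-j)},& T_3'&=5849^{D-i}\,2924^{-(D-j)},& T_4&=1728^{D-i}e^{-2\pi(D-j)}. \end{align*} Moreover, if $D-j>c(D-i)$ then the product is at most $T_1$. In particular, with $\mathcal A=5849$ and $\mathcal B=1.5$, \[\prod_{r=0}^{s-1}c_{i_r,-i_{r+1}}\le\max\big(T_1,(\mathcal As)^{D-i}\mathcal B^{D-j}\big).\]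
   Context: $q=e^{2\pi iz}$, $j$ is the modular $j$-invariant, and for $r\ge1$ the integers $c_{r,n}$ are defined by $j^r=\sum_{n\ge-r}c_{r,n}q^n$. Let $c=e^{2\pi}/1728$. *)

theory Defs
  imports "HOL-Analysis.Analysis" "HOL-Computational_Algebra.Formal_Power_Series"
begin

text \<open>The q-expansion of the modular j-invariant, j = E4^3 / Delta, as formal series.
  E4 = 1 + 240 sum sigma_3(n) q^n,  Delta = q * prod_{n>=1} (1 - q^n)^24.\<close>

definition E4_fps :: "real fps" where
  "E4_fps = Abs_fps (\<lambda>n. if n = 0 then 1 else 240 * (\<Sum>d\<in>{d. d dvd n}. real d ^ 3))"

text \<open>The formal infinite product prod_{n>=1} (1 - q^n)^24: its k-th coefficient
  agrees with that of the finite product over n = 1..k.\<close>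
definition eta24_fps :: "real fps" where
  "eta24_fps = Abs_fps (\<lambda>k. fps_nth ((\<Prod>n\<in>{1..k}. (1 - fps_X ^ n)) ^ 24) k)"

definition qj_fps :: "real fps" where
  "qj_fps = E4_fps ^ 3 * inverse eta24_fps"

text \<open>jcoeff r n = c_{r,n}, the coefficient of q^n in j^r = q^{-r} (q j)^r.\<close>
definition jcoeff :: "nat \<Rightarrow> int \<Rightarrow> real" where
  "jcoeff r n = (if n + int r < 0 then 0 else fps_nth (qj_fps ^ r) (nat (n + int r)))"

definition cconst :: real where
  "cconst = exp (2 * pi) / 1728"

definition T1 :: "int \<Rightarrow> int \<Rightarrow> int \<Rightarrow> nat \<Rightarrow> real" where
  "T1 D i j s = (1728 - exp (2 * pi)) ^ nat (j - i) * real s ^ nat (j - i)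
     * real_of_int (D - i) ^ nat (D - i)
     / (real_of_int (D - j) ^ nat (D - j) * real_of_int (j - i) ^ nat (j - i))"

definition T2 :: "int \<Rightarrow> int \<Rightarrow> int \<Rightarrow> nat \<Rightarrow> real" where
  "T2 D i j s = 2981 ^ nat (D - i) * 1.25 ^ nat (D - j)"

definition T2' :: "int \<Rightarrow> int \<Rightarrow> int \<Rightarrow> nat \<Rightarrow> real" where
  "T2' D i j s = (2393 * real s) ^ nat (D - i) * 1.45 ^ nat (j - i)"

definition T3 :: "int \<Rightarrow> int \<Rightarrow> int \<Rightarrow> nat \<Rightarrow> real" where
  "T3 D i j s = (2386 * real s) ^ nat (D - i) / 2924 ^ nat (D - j)"

definition T3' :: "int \<Rightarrow> int \<Rightarrow> int \<Rightarrow> nat \<Rightarrow> real" where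
  "T3' D i j s = 5849 ^ nat (D - i) / 2924 ^ nat (D - j)"

definition T4 :: "int \<Rightarrow> int \<Rightarrow> int \<Rightarrow> nat \<Rightarrow> real" where
  "T4 D i j s = 1728 ^ nat (D - i) * exp (- 2 * pi * real_of_int (D - j))"

end

theory Submission
  imports Defs
begin


definition ps :: "nat \<Rightarrow> real fps \<Rightarrow> real \<Rightarrow> real" where
  "ps N F x = (\<Sum>n\<le>N. fps_nth F n * x^n)"

definition nonneg :: "real fps \<Rightarrow> bool" where
  "nonneg F \<longleftrightarrow> (\<forall>n. 0 \<le> fps_nth F n)"

lemma nonneg_mult: "nonneg F \<Longrightarrow> nonneg G \<Longrightarrow> nonneg (F*G)"
  unfolding nonneg_def fps_mult_nth by (auto intro!: sum_nonneg)

lemma nonneg_power: "nonneg F \<Longrightarrow> nonneg (F^k)"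
  by (induction k) (auto simp: nonneg_mult, auto simp: nonneg_def)

lemma nonneg_prod: "(\<And>n. n \<in> A \<Longrightarrow> nonneg (f n)) \<Longrightarrow> nonneg (\<Prod>n\<in>A. f n)"
  by (induction A rule: infinite_finite_induct) (auto simp: nonneg_mult, auto simp: nonneg_def)

lemma ps_nonneg: "nonneg F \<Longrightarrow> 0 \<le> x \<Longrightarrow> 0 \<le> ps N F x"
  unfolding ps_def nonneg_def by (auto intro!: sum_nonneg)

lemma ps_mult:
  assumes F: "nonneg F" and G: "nonneg G" and x: "0 \<le> x"
  shows "ps N (F*G) x \<le> ps N F x * ps N G x"
proof -
  have "ps N (F*G) x = (\<Sum>k\<le>N. \<Sum>i\<le>k. (fps_nth F i * x^i) * (fps_nth G (k-i) * x^(k-i)))"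
    unfolding ps_def fps_mult_nth
  proof (intro sum.cong refl)
    fix k assume "k \<in> {..N}"
    show "(\<Sum>i = 0..k. fps_nth F i * fps_nth G (k - i)) * x ^ k =
          (\<Sum>i\<le>k. fps_nth F i * x ^ i * (fps_nth G (k - i) * x ^ (k - i)))"
      unfolding sum_distrib_right atLeast0AtMost
    proof (intro sum.cong refl)
      fix i assume "i \<in> {..k}"
      then have "x^k = x^i * x^(k-i)" by (simp add: power_add[symmetric])
      then show "fps_nth F i * fps_nth G (k - i) * x ^ k = fps_nth F i * x ^ i * (fps_nth G (k - i) * x ^ (k - i))"
        by (simp add: mult_ac)
    qed
  qed
  also have "\<dots> = (\<Sum>(i,j)\<in>{(i,j). i+j \<le> N}. (fps_nth F i * x^i) * (fps_nth G j * x^j))"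
    by (rule sum.triangle_reindex_eq[symmetric])
  also have "\<dots> \<le> (\<Sum>(i,j)\<in>{..N}\<times>{..N}. (fps_nth F i * x^i) * (fps_nth G j * x^j))"
    using F G x unfolding nonneg_def
    by (intro sum_mono2) (auto intro!: mult_nonneg_nonneg)
  also have "\<dots> = ps N F x * ps N G x"
    unfolding ps_def by (simp add: sum_product sum.cartesian_product)
  finally show ?thesis .
qed

lemma ps_power:
  assumes F: "nonneg F" and x: "0 \<le> x"
  shows "ps N (F^k) x \<le> ps N F x ^ k"
proof (induction k)
  case 0
  have "ps N 1 x = 1" unfolding ps_def by (simp add: sum.atMost_shift)
  then show ?case by simp
next
  case (Suc k)
  have "ps N (F^Suc k) x = ps N (F * F^k) x" by simp
  also have "\<dots> \<le> ps N F x * ps N (F^k) x"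
    by (rule ps_mult[OF F nonneg_power[OF F] x])
  also have "\<dots> \<le> ps N F x * ps N F x ^ k"
    by (intro mult_left_mono Suc ps_nonneg F x)
  finally show ?case by simp
qed

lemma ps_prod:
  assumes "finite A" "\<And>n. n \<in> A \<Longrightarrow> nonneg (f n)" "0 \<le> x"
  shows "ps N (\<Prod>n\<in>A. f n) x \<le> (\<Prod>n\<in>A. ps N (f n) x)"
  using assms
proof (induction A rule: finite_induct)
  case empty
  have "ps N 1 x = 1" unfolding ps_def by (simp add: sum.atMost_shift)
  then show ?case by simp
next
  case (insert a A)
  have "ps N (\<Prod>n\<in>insert a A. f n) x = ps N (f a * (\<Prod>n\<in>A. f n)) x"
    using insert by simp
  also have "\<dots> \<le> ps N (f a) x * ps N (\<Prod>n\<in>A. f n) x"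
    using insert by (intro ps_mult nonneg_prod) auto
  also have "\<dots> \<le> ps N (f a) x * (\<Prod>n\<in>A. ps N (f n) x)"
    using insert by (intro mult_left_mono ps_nonneg) auto
  finally show ?case using insert by simp
qed

lemma coeff_le_ps:
  assumes "nonneg F" "0 \<le> x"
  shows "fps_nth F d * x^d \<le> ps d F x"
  unfolding ps_def using assms unfolding nonneg_def
  by (intro member_le_sum) auto

lemma ps_mono_x:
  assumes F: "nonneg F" and F0: "fps_nth F 0 = 1" and y: "0 \<le> y" "y \<le> x1"
  shows "ps N F y \<le> 1 + (y/x1) * (ps N F x1 - 1)"
proof (cases "x1 = 0")
  case True
  then have "y = 0" using y by simp
  then show ?thesis using True F0 unfolding ps_def by (simp add: sum.atMost_shift)
next
  case False
  then have x1: "x1 > 0" using y by simp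
  have "ps N F y = 1 + (\<Sum>n\<in>{1..N}. fps_nth F n * y^n)"
    unfolding ps_def using F0 
    by (simp add: atMost_atLeast0 sum.atLeast_Suc_atMost)
  also have "(\<Sum>n\<in>{1..N}. fps_nth F n * y^n) \<le> (\<Sum>n\<in>{1..N}. (y/x1) * (fps_nth F n * x1^n))"
  proof (intro sum_mono)
    fix n assume n: "n \<in> {1..N}"
    have "(y/x1)^n \<le> (y/x1)^1"
      using n y x1 by (intro power_decreasing) auto
    then have "y^n \<le> (y/x1) * x1^n"
      using x1 n by (simp add: power_divide field_simps)
    then show "fps_nth F n * y^n \<le> (y/x1) * (fps_nth F n * x1^n)"
      using F unfolding nonneg_def by (metis mult.left_commute mult_left_mono)
  qed
  also have "(\<Sum>n\<in>{1..N}. (y/x1) * (fps_nth F n * x1^n)) = (y/x1) * (ps N F x1 - 1)"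
    unfolding ps_def using F0 
    by (simp add: atMost_atLeast0 sum.atLeast_Suc_atMost sum_distrib_left)
  finally show ?thesis by simp
qed

lemma ps_add: "ps N (F + G) x = ps N F x + ps N G x"
  unfolding ps_def by (simp add: algebra_simps sum.distrib)

lemma ps_one: "ps N 1 x = 1"
  unfolding ps_def by (simp add: sum.atMost_shift)

lemma ps_Xpow: "0 \<le> x \<Longrightarrow> ps N (fps_X ^ n) x \<le> x ^ n"
proof -
  assume x: "0 \<le> x"
  have "ps N (fps_X ^ n) x = (\<Sum>k\<le>N. if k = n then x^n else 0)"
    unfolding ps_def by (rule sum.cong) auto
  also have "\<dots> = (if n \<le> N then x^n else 0)" by (simp add: sum.delta)
  finally show ?thesis using x by simp
qed

lemma nonneg_Xpow: "nonneg (fps_X ^ n)"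
  unfolding nonneg_def by simp

lemma geo_fps:
  fixes n :: nat and x :: real
  assumes n: "n \<ge> 1" and x: "0 \<le> x" "x < 1"
  defines "F \<equiv> inverse (1 - fps_X ^ n :: real fps)"
  shows "nonneg F" "fps_nth F 0 = 1" "ps N F x \<le> 1 / (1 - x^n)"
proof -
  have c0: "fps_nth (1 - fps_X ^ n :: real fps) 0 = 1" using n by simp
  have "F * (1 - fps_X ^ n) = 1" unfolding F_def using c0 by (intro inverse_mult_eq_1) simp
  then have FF: "F = 1 + fps_X ^ n * F" by (simp add: algebra_simps)
  have nth: "fps_nth F k = (if k = 0 then 1 else 0) + (if k < n then 0 else fps_nth F (k - n))" for k
    by (subst FF) (simp add: fps_X_power_mult_nth)
  show "nonneg F" unfolding nonneg_def
  proof
    fix k show "0 \<le> fps_nth F k"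
    proof (induction k rule: less_induct)
      case (less k)
      show ?case
      proof (cases "k < n")
        case True then show ?thesis by (simp add: nth[of k])
      next
        case False
        then have "k - n < k" using n by simp
        then have "0 \<le> fps_nth F (k - n)" by (rule less)
        then show ?thesis using False by (simp add: nth[of k])
      qed
    qed
  qed
  then have nnF: "nonneg F" .
  show "fps_nth F 0 = 1" using nth[of 0] n by simp
  have "ps N F x = ps N 1 x + ps N (fps_X ^ n * F) x"
    by (subst FF) (simp add: ps_add)
  also have "\<dots> \<le> 1 + ps N (fps_X ^ n) x * ps N F x"
    using ps_mult[OF nonneg_Xpow nnF x(1)] by (simp add: ps_one)
  also have "\<dots> \<le> 1 + x^n * ps N F x"
    using ps_Xpow[OF x(1)] ps_nonneg[OF nnF x(1)] by (simp add: mult_right_mono)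
  finally have "ps N F x * (1 - x^n) \<le> 1" by (simp add: algebra_simps)
  moreover have "x^n < 1" using x n by (simp add: power_less_one_iff)
  ultimately show "ps N F x \<le> 1 / (1 - x^n)" by (simp add: field_simps)
qed

definition lowtriv :: "nat \<Rightarrow> real fps \<Rightarrow> bool" where
  "lowtriv k f \<longleftrightarrow> fps_nth f 0 = 1 \<and> (\<forall>i. 0 < i \<and> i \<le> k \<longrightarrow> fps_nth f i = 0)"

lemma mult_lowtriv_nth:
  assumes "lowtriv k f" "i \<le> k"
  shows "fps_nth (A * f) i = fps_nth A i"
proof -
  have "fps_nth (A * f) i = (\<Sum>j<i. fps_nth A j * fps_nth f (i - j)) + fps_nth A i * fps_nth f 0"
    unfolding fps_mult_nth atLeast0AtMost by (simp add: lessThan_Suc_atMost[symmetric])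
  also have "(\<Sum>j<i. fps_nth A j * fps_nth f (i - j)) = 0"
    using assms unfolding lowtriv_def by (intro sum.neutral) auto
  finally show ?thesis using assms unfolding lowtriv_def by simp
qed

lemma lowtriv_mult: "lowtriv k f \<Longrightarrow> lowtriv k g \<Longrightarrow> lowtriv k (f * g)"
  unfolding lowtriv_def[of k "f*g"]
  using mult_lowtriv_nth[of k g _ f] by (auto simp: lowtriv_def)

lemma lowtriv_prod: "(\<And>n. n \<in> A \<Longrightarrow> lowtriv k (f n)) \<Longrightarrow> lowtriv k (\<Prod>n\<in>A. f n)"
  apply (induction A rule: infinite_finite_induct)
    apply (simp add: lowtriv_def)
   apply (simp add: lowtriv_def)
  apply (simp add: lowtriv_mult)
  done

lemma lowtriv_power: "lowtriv k f \<Longrightarrow> lowtriv k (f ^ m)"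
  apply (induction m)
   apply (simp add: lowtriv_def)
  apply (simp add: lowtriv_mult)
  done

definition Pf :: "nat \<Rightarrow> real fps" where
  "Pf k = (\<Prod>n\<in>{1..k}. (1 - fps_X ^ n))"

lemma eta_nth: "k \<le> N \<Longrightarrow> fps_nth eta24_fps k = fps_nth (Pf N ^ 24) k"
proof -
  assume kN: "k \<le> N"
  have "{1..N} = {1..k} \<union> {k+1..N}" using kN by auto
  then have "Pf N = Pf k * (\<Prod>n\<in>{k+1..N}. (1 - fps_X ^ n))"
    unfolding Pf_def by (simp add: prod.union_disjoint[symmetric] ivl_disj_int)
  moreover have "lowtriv k (\<Prod>n\<in>{k+1..N}. (1 - fps_X ^ n))"
    by (intro lowtriv_prod) (auto simp: lowtriv_def)
  ultimately have "fps_nth (Pf N ^ 24) k = fps_nth (Pf k ^ 24) k"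
    using mult_lowtriv_nth[OF lowtriv_power[of k _ 24] order.refl] by (simp add: power_mult_distrib)
  then show ?thesis unfolding eta24_fps_def Pf_def by simp
qed

lemma inverse_agree:
  fixes A B :: "real fps"
  assumes AB: "\<And>i. i \<le> N \<Longrightarrow> fps_nth A i = fps_nth B i" and A0: "fps_nth A 0 \<noteq> 0"
    and iN: "i \<le> N"
  shows "fps_nth (inverse A) i = fps_nth (inverse B) i"
proof -
  have B0: "fps_nth B 0 \<noteq> 0" using AB[of 0] A0 by simp
  have eq: "inverse A - inverse B = (inverse A * inverse B) * (B - A)"
  proof -
    have "(inverse A * inverse B) * (B - A) = inverse A * (inverse B * B) - inverse B * (inverse A * A)"
      by (simp add: algebra_simps)
    also have "\<dots> = inverse A - inverse B"
      using inverse_mult_eq_1[OF A0] inverse_mult_eq_1[OF B0] by simp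
    finally show ?thesis by simp
  qed
  have "fps_nth ((inverse A * inverse B) * (B - A)) i = 0"
    unfolding fps_mult_nth using AB iN by (intro sum.neutral) auto
  then show ?thesis using eq by (metis fps_sub_nth right_minus_eq)
qed

lemma eta0: "fps_nth eta24_fps 0 = 1"
  unfolding eta24_fps_def by simp

lemma inv_eta_nth:
  assumes "i \<le> N"
  shows "fps_nth (inverse eta24_fps) i = fps_nth ((\<Prod>n\<in>{1..N}. inverse (1 - fps_X ^ n)) ^ 24) i"
proof -
  have "fps_nth (inverse eta24_fps) i = fps_nth (inverse (Pf N ^ 24)) i"
    by (rule inverse_agree[of N eta24_fps "Pf N ^ 24" i]) (auto simp: eta_nth eta0 assms)
  also have "inverse (Pf N ^ 24) = (\<Prod>n\<in>{1..N}. inverse (1 - fps_X ^ n)) ^ 24"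
    unfolding Pf_def fps_inverse_power inverse_prod_fps ..
  finally show ?thesis .
qed

lemma nonneg_inv_eta: "nonneg (inverse eta24_fps)"
  unfolding nonneg_def
proof
  fix i
  have "nonneg ((\<Prod>n\<in>{1..i}. inverse (1 - fps_X ^ n)) ^ 24)"
    by (intro nonneg_power nonneg_prod geo_fps(1)[where x=0]) auto
  then show "0 \<le> fps_nth (inverse eta24_fps) i"
    using inv_eta_nth[of i i] unfolding nonneg_def by simp
qed

lemma weierstrass_prod:
  fixes a :: "nat \<Rightarrow> real"
  assumes "finite A" "\<And>n. n \<in> A \<Longrightarrow> 0 \<le> a n \<and> a n \<le> 1"
  shows "1 - (\<Sum>n\<in>A. a n) \<le> (\<Prod>n\<in>A. (1 - a n))"
  using assms
proof (induction A rule: finite_induct)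
  case empty then show ?case by simp
next
  case (insert b A)
  have IH: "1 - (\<Sum>n\<in>A. a n) \<le> (\<Prod>n\<in>A. (1 - a n))" using insert by auto
  have p0: "0 \<le> (\<Prod>n\<in>A. (1 - a n))" using insert by (intro prod_nonneg) auto
  have p1: "(\<Prod>n\<in>A. (1 - a n)) \<le> 1" using insert by (intro prod_le_1) auto
  have ab: "0 \<le> a b" "a b \<le> 1" using insert by auto
  have "1 - (\<Sum>n\<in>insert b A. a n) = (1 - (\<Sum>n\<in>A. a n)) - a b" using insert by simp
  also have "\<dots> \<le> (1 - a b) * (\<Prod>n\<in>A. (1 - a n))"
  proof -
    have "a b * (\<Prod>n\<in>A. (1 - a n)) \<le> a b" using p1 ab by (intro mult_left_le) auto
    then show ?thesis using IH by (simp add: algebra_simps)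
  qed
  finally show ?case using insert by simp
qed

lemma geo_sum1:
  fixes x :: real
  assumes "0 \<le> x" "x < 1"
  shows "(\<Sum>n\<in>{1..N}. x^n) \<le> x / (1 - x)"
proof (cases "N = 0")
  case True then show ?thesis using assms by simp
next
  case False
  then have "(1 - x) * (\<Sum>n\<in>{1..N}. x^n) = x - x^(Suc N)"
    using sum_gp_multiplied[of 1 N x] by simp
  moreover have "0 \<le> x^(Suc N)" using assms by simp
  ultimately have "(\<Sum>n\<in>{1..N}. x^n) * (1 - x) \<le> x" by (simp add: algebra_simps)
  then show ?thesis using assms by (simp add: pos_le_divide_eq)
qed

lemma ps_inv_eta:
  assumes x: "0 \<le> x" "x \<le> 1/4"
  shows "ps N (inverse eta24_fps) x \<le> ((1 - x) / (1 - 2*x)) ^ 24"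
proof -
  define F where "F = (\<Prod>n\<in>{1..N}. inverse (1 - fps_X ^ n :: real fps))"
  have nnF: "nonneg F" unfolding F_def
    by (intro nonneg_prod geo_fps(1)[where x=0]) auto
  have "ps N (inverse eta24_fps) x = ps N (F ^ 24) x"
    unfolding ps_def F_def using inv_eta_nth[of _ N] by simp
  also have "\<dots> \<le> ps N F x ^ 24" by (rule ps_power[OF nnF x(1)])
  finally have e1: "ps N (inverse eta24_fps) x \<le> ps N F x ^ 24" .
  have "ps N F x \<le> (\<Prod>n\<in>{1..N}. ps N (inverse (1 - fps_X ^ n :: real fps)) x)"
    unfolding F_def using x by (intro ps_prod geo_fps(1)[where x=0]) auto
  also have "\<dots> \<le> (\<Prod>n\<in>{1..N}. 1 / (1 - x^n))"
    using x by (intro prod_mono conjI ps_nonneg geo_fps(1)[where x=0] geo_fps(3)) auto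
  also have "\<dots> = 1 / (\<Prod>n\<in>{1..N}. (1 - x^n))" by (simp add: prod_dividef)
  also have "\<dots> \<le> 1 / (1 - (\<Sum>n\<in>{1..N}. x^n))"
  proof -
    have s: "(\<Sum>n\<in>{1..N}. x^n) \<le> x / (1 - x)" using x by (intro geo_sum1) auto
    have "x / (1 - x) \<le> 1/3" using x by (simp add: field_simps)
    then have pos: "0 < 1 - (\<Sum>n\<in>{1..N}. x^n)" using s by linarith
    have "1 - (\<Sum>n\<in>{1..N}. x^n) \<le> (\<Prod>n\<in>{1..N}. (1 - x^n))"
      using x by (intro weierstrass_prod) (auto simp: power_le_one)
    then show ?thesis using pos by (intro divide_left_mono) auto
  qed
  also have "\<dots> \<le> (1 - x) / (1 - 2*x)"
  proof -
    have s: "(\<Sum>n\<in>{1..N}. x^n) \<le> x / (1 - x)" using x by (intro geo_sum1) auto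
    have "1 - x / (1 - x) = (1 - 2*x) / (1 - x)" using x by (simp add: field_simps)
    moreover have "0 < (1 - 2*x) / (1 - x)" using x by simp
    ultimately have h: "(1 - 2*x) / (1 - x) \<le> 1 - (\<Sum>n\<in>{1..N}. x^n)" "0 < (1 - 2*x) / (1 - x)"
      using s by auto
    then have "0 < (1 - (\<Sum>n\<in>{1..N}. x^n)) * ((1 - 2*x) / (1 - x))"
      by (intro mult_pos_pos) auto
    then have "1 / (1 - (\<Sum>n\<in>{1..N}. x^n)) \<le> 1 / ((1 - 2*x) / (1 - x))"
      using h by (intro divide_left_mono) auto
    then show ?thesis by simp
  qed
  finally have "ps N F x \<le> (1 - x) / (1 - 2 * x)" .
  then have "ps N F x ^ 24 \<le> ((1 - x) / (1 - 2 * x)) ^ 24"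
    using ps_nonneg[OF nnF x(1)] by (intro power_mono) auto
  then show ?thesis using e1 by linarith
qed

lemma sigma3_le:
  assumes n: "n \<ge> (1::nat)"
  shows "(\<Sum>d\<in>{d. d dvd n}. real d ^ 3) \<le> real n ^ 4"
proof -
  have sub: "{d. d dvd n} \<subseteq> {1..n}" using n by (auto intro: dvd_imp_le dvd_pos_nat)
  have "(\<Sum>d\<in>{d. d dvd n}. real d ^ 3) \<le> (\<Sum>d\<in>{1..n}. real d ^ 3)"
    using sub by (intro sum_mono2) auto
  also have "\<dots> \<le> (\<Sum>d\<in>{1..n}. real n ^ 3)"
    by (intro sum_mono power_mono) auto
  also have "\<dots> = real n ^ 4" by (simp add: power_Suc[symmetric] del: power_Suc)
  finally show ?thesis .
qed

lemma pow4_le: "n \<ge> 1 \<Longrightarrow> real n ^ 4 \<le> 16 ^ (n - 1)"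
proof (induction n rule: dec_induct)
  case base then show ?case by simp
next
  case (step n)
  have "real (Suc n) ^ 4 \<le> 16 * real n ^ 4"
  proof -
    have "real (Suc n) \<le> 2 * real n" using step by simp
    then have "real (Suc n) ^ 4 \<le> (2 * real n) ^ 4" by (intro power_mono) auto
    then show ?thesis by (simp add: power_mult_distrib)
  qed
  also have "\<dots> \<le> 16 * 16 ^ (n - 1)" using step by simp
  also have "\<dots> = 16 ^ (Suc n - 1)" using step by (cases n) auto
  finally show ?case .
qed

lemma E4_nth: "fps_nth E4_fps n = (if n = 0 then 1 else 240 * (\<Sum>d\<in>{d. d dvd n}. real d ^ 3))"
  unfolding E4_fps_def by simp

lemma nonneg_E4: "nonneg E4_fps"
  unfolding nonneg_def E4_nth by (auto intro!: sum_nonneg)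

lemma ps_E4:
  assumes x: "0 \<le> x" "x < 1/16"
  shows "ps N E4_fps x \<le> 1 + 240 * x / (1 - 16 * x)"
proof -
  have "ps N E4_fps x = 1 + (\<Sum>n\<in>{1..N}. fps_nth E4_fps n * x^n)"
    unfolding ps_def by (simp add: atMost_atLeast0 sum.atLeast_Suc_atMost E4_nth)
  also have "(\<Sum>n\<in>{1..N}. fps_nth E4_fps n * x^n) \<le> (\<Sum>n\<in>{1..N}. 15 * (16 * x)^n)"
  proof (intro sum_mono)
    fix n assume n: "n \<in> {1..N}"
    have "fps_nth E4_fps n \<le> 240 * 16 ^ (n - 1)"
      using n sigma3_le[of n] pow4_le[of n] by (simp add: E4_nth)
    then have "fps_nth E4_fps n * x^n \<le> (240 * 16 ^ (n - 1)) * x^n"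
      using x by (intro mult_right_mono) auto
    also have "(240 * 16 ^ (n - 1)) * x^n = 15 * (16 * x)^n"
      using n by (cases n) (auto simp: power_mult_distrib)
    finally show "fps_nth E4_fps n * x^n \<le> 15 * (16 * x)^n" .
  qed
  also have "\<dots> = 15 * (\<Sum>n\<in>{1..N}. (16 * x)^n)" by (simp add: sum_distrib_left)
  also have "\<dots> \<le> 15 * ((16 * x) / (1 - 16 * x))"
    using x by (intro mult_left_mono geo_sum1) auto
  finally show ?thesis by simp
qed

definition Gb :: "real \<Rightarrow> real" where
  "Gb x = (1 + 240 * x / (1 - 16 * x)) ^ 3 * ((1 - x) / (1 - 2*x)) ^ 24"

lemma nonneg_qj: "nonneg qj_fps"
  unfolding qj_fps_def by (intro nonneg_mult nonneg_power nonneg_E4 nonneg_inv_eta)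

lemma qj0: "fps_nth qj_fps 0 = 1"
  unfolding qj_fps_def by (simp add: E4_nth eta0 fps_nth_power_0)

lemma ps_qj:
  assumes x: "0 \<le> x" "x < 1/16"
  shows "ps N qj_fps x \<le> Gb x"
proof -
  have "ps N qj_fps x \<le> ps N (E4_fps ^ 3) x * ps N (inverse eta24_fps) x"
    unfolding qj_fps_def by (intro ps_mult nonneg_power nonneg_E4 nonneg_inv_eta x)
  also have "\<dots> \<le> ps N E4_fps x ^ 3 * ps N (inverse eta24_fps) x"
    by (intro mult_right_mono ps_power ps_nonneg nonneg_E4 nonneg_inv_eta x)
  also have "\<dots> \<le> (1 + 240 * x / (1 - 16 * x)) ^ 3 * ((1 - x) / (1 - 2*x)) ^ 24"
  proof (intro mult_mono power_mono ps_E4 ps_inv_eta x)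
    show "0 \<le> ps N E4_fps x" by (intro ps_nonneg nonneg_E4 x)
    show "0 \<le> (1 + 240 * x / (1 - 16 * x)) ^ 3" using x by simp
    show "0 \<le> ps N (inverse eta24_fps) x" by (intro ps_nonneg nonneg_inv_eta x)
    show "x \<le> 1/4" using x by simp
  qed
  finally show ?thesis unfolding Gb_def .
qed

lemma coeff_bound:
  assumes x: "0 < x" "x < 1/16"
  shows "fps_nth (qj_fps ^ R) d \<le> Gb x ^ R / x ^ d"
proof -
  have "fps_nth (qj_fps ^ R) d * x^d \<le> ps d (qj_fps ^ R) x"
    using x by (intro coeff_le_ps nonneg_power nonneg_qj) auto
  also have "\<dots> \<le> ps d qj_fps x ^ R"
    using x by (intro ps_power nonneg_qj) auto
  also have "\<dots> \<le> Gb x ^ R"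
    using x by (intro power_mono ps_qj ps_nonneg nonneg_qj) auto
  finally show ?thesis using x by (simp add: pos_le_divide_eq)
qed



lemma sq_up: "0 \<le> (a::real) \<Longrightarrow> a \<le> r \<Longrightarrow> r * r \<le> s \<Longrightarrow> a^2 \<le> s"
  by (smt (verit, ccfv_SIG) mult_mono power2_eq_square)

lemma sq_lo: "0 \<le> (r::real) \<Longrightarrow> r \<le> a \<Longrightarrow> s \<le> r * r \<Longrightarrow> s \<le> a^2"
  by (smt (verit, ccfv_SIG) mult_mono power2_eq_square)

lemma exp_split: "exp (2*pi) = ((((((((exp(2*pi/256))^2)^2)^2)^2)^2)^2)^2)^2"
  by (simp add: exp_double[symmetric])

lemma exp_split6: "exp (2*pi) = ((((((exp(2*pi/64))^2)^2)^2)^2)^2)^2"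
  by (simp add: exp_double[symmetric])

lemma E_upper: "exp (2*pi) \<le> 600"
proof -
  have y: "2*pi/256 \<le> 2455/100000" "0 \<le> 2*pi/256" using pi_approx by auto
  have "exp (2*pi/256) \<le> 1 + 2*pi/256 + (2*pi/256)^2" using y by (intro exp_bound) auto
  also have "\<dots> \<le> 1 + 2455/100000 + (2455/100000)^2" using y by (intro add_mono power_mono) auto
  finally have e0: "exp (2*pi/256) \<le> 1025153/1000000" by (simp add: power2_eq_square)
  have "exp (2*pi/256)^2 \<le> 1050939/1000000" by (rule sq_up[OF _ e0]) auto
  then have "(exp (2*pi/256)^2)^2 \<le> 1104473/1000000" by (rule sq_up[rotated]) auto
  then have "((exp (2*pi/256)^2)^2)^2 \<le> 1219861/1000000" by (rule sq_up[rotated]) auto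
  then have "(((exp (2*pi/256)^2)^2)^2)^2 \<le> 1488061/1000000" by (rule sq_up[rotated]) auto
  then have "((((exp (2*pi/256)^2)^2)^2)^2)^2 \<le> 1107163/500000" by (rule sq_up[rotated]) auto
  then have "(((((exp (2*pi/256)^2)^2)^2)^2)^2)^2 \<le> 122581/25000" by (rule sq_up[rotated]) auto
  then have "((((((exp (2*pi/256)^2)^2)^2)^2)^2)^2)^2 \<le> 120209/5000" by (rule sq_up[rotated]) auto
  then have "(((((((exp (2*pi/256)^2)^2)^2)^2)^2)^2)^2)^2 \<le> 2890041/5000" by (rule sq_up[rotated]) auto
  then show ?thesis unfolding exp_split by simp
qed

lemma E_lower: "520 \<le> exp (2*pi)"
proof -
  have y: "981/10000 \<le> 2*pi/64" using pi_approx by auto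
  have "1 + 981/10000 + (981/10000)^2/2 \<le> 1 + 2*pi/64 + (2*pi/64)^2/2"
    using y by (intro add_mono power_mono divide_right_mono) auto
  also have "\<dots> \<le> exp (2*pi/64)" by (rule exp_lower_Taylor_quadratic) simp
  finally have e0: "1102911/1000000 \<le> exp (2*pi/64)" by (simp add: power2_eq_square)
  have "304103/250000 \<le> exp (2*pi/64)^2" by (rule sq_lo[OF _ e0]) auto
  then have "739829/500000 \<le> (exp (2*pi/64)^2)^2" by (rule sq_lo[rotated]) auto
  then have "2189387/1000000 \<le> ((exp (2*pi/64)^2)^2)^2" by (rule sq_lo[rotated]) auto
  then have "958683/200000 \<le> (((exp (2*pi/64)^2)^2)^2)^2" by (rule sq_lo[rotated]) auto
  then have "28721/1250 \<le> ((((exp (2*pi/64)^2)^2)^2)^2)^2" by (rule sq_lo[rotated]) auto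
  then have "5279333/10000 \<le> (((((exp (2*pi/64)^2)^2)^2)^2)^2)^2" by (rule sq_lo[rotated]) auto
  then show ?thesis unfolding exp_split6 by simp
qed



lemma Gb1100: "Gb (1/1100) \<le> 2"
  unfolding Gb_def by (simp add: power_divide)

lemma Gb800: "Gb (1/800) \<le> 959/1000 * (1 + 1128/800)"
  unfolding Gb_def by (simp add: power_divide)

lemma Gb_pos: "0 < x \<Longrightarrow> x < 1/16 \<Longrightarrow> 0 < Gb x"
  unfolding Gb_def by (intro mult_pos_pos zero_less_power) (auto simp: field_simps)

lemma coeff_bound2:
  assumes y: "0 < y" "y \<le> xa" and xa: "xa < 1/16" and G: "Gb xa \<le> 1 + L * xa" and L: "0 \<le> L"
  shows "fps_nth (qj_fps ^ R) d \<le> (1 + L * y) ^ R / y ^ d"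
proof -
  have "fps_nth (qj_fps ^ R) d * y^d \<le> ps d (qj_fps ^ R) y"
    using y by (intro coeff_le_ps nonneg_power nonneg_qj) auto
  also have "\<dots> \<le> ps d qj_fps y ^ R"
    using y by (intro ps_power nonneg_qj) auto
  also have "\<dots> \<le> (1 + L * y) ^ R"
  proof (intro power_mono)
    show "0 \<le> ps d qj_fps y" using y by (intro ps_nonneg nonneg_qj) auto
    have "ps d qj_fps y \<le> 1 + (y / xa) * (ps d qj_fps xa - 1)"
      using y by (intro ps_mono_x nonneg_qj qj0) auto
    also have "\<dots> \<le> 1 + (y / xa) * (L * xa)"
    proof -
      have "ps d qj_fps xa \<le> Gb xa" using y xa by (intro ps_qj) auto
      then show ?thesis using G y by (intro add_left_mono mult_left_mono) auto
    qed
    also have "\<dots> = 1 + L * y" using y by simp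
    finally show "ps d qj_fps y \<le> 1 + L * y" .
  qed
  finally show ?thesis using y by (simp add: pos_le_divide_eq)
qed

lemma stepA:
  assumes d: "1 \<le> d" "d \<le> R"
  shows "fps_nth (qj_fps ^ R) d \<le> (3300 * real R / real d) ^ d"
proof -
  define y where "y = real d / (1100 * real R)"
  have R: "real R > 0" using d by simp
  have y: "0 < y" "y \<le> 1/1100" using d R unfolding y_def by (auto simp: field_simps)
  have "fps_nth (qj_fps ^ R) d \<le> (1 + 1100 * y) ^ R / y ^ d"
    using y Gb1100 by (intro coeff_bound2[where xa="1/1100"]) auto
  also have "(1 + 1100 * y) ^ R \<le> 3 ^ d"
  proof -
    have "1 + 1100 * y = 1 + real d / real R" using R unfolding y_def by simp
    also have "\<dots> \<le> exp (real d / real R)" by (rule exp_ge_add_one_self)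
    finally have "(1 + 1100 * y) ^ R \<le> exp (real d / real R) ^ R"
      using y by (intro power_mono) auto
    also have "\<dots> = exp (real d)" using R by (simp add: exp_of_nat_mult[symmetric])
    also have "\<dots> = exp 1 ^ d" by (simp add: exp_of_nat_mult[symmetric])
    also have "\<dots> \<le> 3 ^ d" using exp_le by (intro power_mono) auto
    finally show ?thesis .
  qed
  then have "(1 + 1100 * y) ^ R / y ^ d \<le> 3 ^ d / y ^ d"
    using y by (intro divide_right_mono) auto
  also have "\<dots> = (3300 * real R / real d) ^ d"
  proof -
    have "(3300::real)^d = 3 ^ d * 1100 ^ d" by (simp add: power_mult_distrib[symmetric])
    then show ?thesis using R d unfolding y_def by (simp add: power_divide power_mult_distrib field_simps)
  qed
  finally show ?thesis .
qed

lemma kl: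
  fixes m d K x1 Q B :: real
  assumes pos: "m > 0" "d > 0" "K > 0" "x1 > 0" "B > 0" and Q: "Q < 1"
    and hQ: "(d/(m+d) - K*x1/(1+K*x1))^2 / ((K*x1/(1+K*x1)) * (1 - K*x1/(1+K*x1))) \<le> Q"
    and hB: "B \<le> (1-Q)*(1+K*x1)"
  shows "(m+d) * ln B - d * ln x1 \<le> d * ln K + (m+d) * ln (m+d) - m * ln m - d * ln d"
proof -
  define R where "R = m + d"
  define p where "p = K*x1/(1+K*x1)"
  have R: "R > 0" using pos unfolding R_def by simp
  have kx: "0 < K*x1" using pos by simp
  have p0: "0 < p" unfolding p_def using kx by (intro divide_pos_pos) auto
  have p1: "p < 1" unfolding p_def using kx by (simp add: divide_less_eq)
  note p = p0 p1
  have lnp: "ln p = ln K + ln x1 - ln (1+K*x1)"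
  proof -
    have h1: "0 < 1 + K*x1" using kx by simp
    have "ln (K*x1/(1+K*x1)) = ln (K*x1) - ln (1+K*x1)" using kx h1 by (rule ln_divide_pos)
    moreover have "ln (K*x1) = ln K + ln x1" using pos by (intro ln_mult_pos) auto
    ultimately show ?thesis unfolding p_def by simp
  qed
  have ln1p: "ln (1 - p) = - ln (1+K*x1)"
  proof -
    have h1: "1 + K*x1 \<noteq> 0" using kx by simp
    have "1 - p = 1 / (1+K*x1)" unfolding p_def using h1 by (simp add: field_simps)
    moreover have "0 < 1 + K*x1" using kx by simp
    ultimately show ?thesis by (simp add: ln_div)
  qed
  have l1: "ln (m/(R*(1-p))) \<le> m/(R*(1-p)) - 1" using pos R p by (intro ln_le_minus_one) auto
  have l2: "ln (d/(R*p)) \<le> d/(R*p) - 1" using pos R p by (intro ln_le_minus_one) auto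
  have e1: "ln (m/(R*(1-p))) = ln m - ln R - ln (1-p)" using pos R p by (simp add: ln_div ln_mult)
  have e2: "ln (d/(R*p)) = ln d - ln R - ln p" using pos R p by (simp add: ln_div ln_mult)
  have "m * ln (m/(R*(1-p))) + d * ln (d/(R*p)) \<le> m * (m/(R*(1-p)) - 1) + d * (d/(R*p) - 1)"
    using l1 l2 pos by (intro add_mono mult_left_mono) auto
  also have "\<dots> = R * ((d/R - p)^2 / (p * (1 - p)))"
  proof -
    have nz: "R \<noteq> 0" "p \<noteq> 0" "1 - p \<noteq> 0" using R p by auto
    have "m * (m/(R*(1-p)) - 1) + d * (d/(R*p) - 1) = (m*m*p + d*d*(1-p)) / (R*p*(1-p)) - (m + d)"
      using nz by (simp add: field_simps)
    also have "\<dots> = (m*m*p + d*d*(1-p)) / (R*p*(1-p)) - R" unfolding R_def ..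
    also have "\<dots> = (m*m*p + d*d*(1-p) - R*R*p*(1-p)) / (R*p*(1-p))"
      using nz by (simp add: field_simps)
    also have "m*m*p + d*d*(1-p) - R*R*p*(1-p) = (d - R*p)^2"
      unfolding R_def by (simp add: power2_eq_square algebra_simps)
    also have "(d - R*p)^2 / (R*p*(1-p)) = R * ((d/R - p)^2 / (p * (1 - p)))"
      using nz by (simp add: field_simps power2_eq_square)
    finally show ?thesis .
  qed
  also have "\<dots> \<le> R * Q" using hQ R unfolding p_def R_def by (intro mult_left_mono) auto
  finally have kl: "m * ln (m/(R*(1-p))) + d * ln (d/(R*p)) \<le> R * Q" .
  have "ln B \<le> ln ((1-Q)*(1+K*x1))" using hB pos Q by simp
  also have "\<dots> = ln (1-Q) + ln (1+K*x1)" using Q kx by (intro ln_mult_pos) auto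
  also have "ln (1-Q) \<le> -Q" using Q ln_le_minus_one[of "1-Q"] by simp
  finally have lB: "ln B \<le> - Q + ln (1+K*x1)" by simp
  have "R * ln B \<le> R * (- Q + ln (1+K*x1))" using lB R by (intro mult_left_mono) auto
  then show ?thesis using kl unfolding e1 e2 lnp ln1p R_def[symmetric]
    by (simp add: algebra_simps R_def)
qed

lemma K_bounds: "1128 \<le> 1728 - exp (2*pi)" "1728 - exp (2*pi) \<le> 1208"
  using E_upper E_lower by auto

lemma Q_aux:
  fixes K a :: real
  assumes "a > 0" "K \<noteq> 0"
  shows "(K*(K-928)/(1728*a))^2 / (800*K/a^2) = K*(K-928)^2/(1728^2*800)"
  using assms by (simp add: field_simps power2_eq_square)

lemma Q_bound:
  fixes K :: real
  assumes K: "1128 \<le> K" "K \<le> 1208"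
  shows "(K/1728 - K/(800+K))^2 / ((K/(800+K)) * (1 - K/(800+K))) \<le> 41/1000"
proof -
  have nz: "800 + K \<noteq> 0" "K \<noteq> 0" using K by auto
  have a: "800 + K > 0" using K by simp
  have e1: "K/1728 - K/(800+K) = K*(K-928)/(1728*(800+K))" using nz by (simp add: field_simps)
  have e2: "(K/(800+K)) * (1 - K/(800+K)) = 800*K/(800+K)^2" using nz by (simp add: field_simps power2_eq_square)
  have "(K/1728 - K/(800+K))^2 / ((K/(800+K)) * (1 - K/(800+K))) = K * (K - 928)^2 / (1728^2 * 800)"
    unfolding e1 e2 by (rule Q_aux[OF a nz(2)])
  also have "\<dots> \<le> 1208 * 280^2 / (1728^2 * 800)"
    using K by (intro divide_right_mono mult_mono power_mono) auto
  also have "\<dots> \<le> 41/1000" by simp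
  finally show ?thesis .
qed

lemma stepB:
  fixes m d :: nat
  assumes m: "1 \<le> m" and d: "1 \<le> d" and c: "cconst * real (m+d) < real m"
  shows "fps_nth (qj_fps ^ (m+d)) d
           \<le> (1728 - exp (2*pi))^d * real (m+d)^(m+d) / (real m ^ m * real d ^ d)"
proof -
  define K where "K = 1728 - exp (2*pi)"
  define R where "R = m + d"
  define y where "y = real d / (K * real m)"
  have K: "1128 \<le> K" "K \<le> 1208" using K_bounds unfolding K_def by auto
  have mpos: "real m > 0" and dpos: "real d > 0" using m d by auto
  have Rr: "real R = real m + real d" unfolding R_def by simp
  have ypos: "0 < y" unfolding y_def using K mpos dpos by simp
  have Tpos: "0 < K^d * real R ^ R / (real m ^ m * real d ^ d)"
    using K mpos dpos Rr by (intro divide_pos_pos mult_pos_pos zero_less_power) auto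
  have "fps_nth (qj_fps ^ R) d \<le> K^d * real R ^ R / (real m ^ m * real d ^ d)"
  proof (cases "y \<le> 1/800")
    case True
    have G: "Gb (1/800) \<le> 1 + K * (1/800)" using Gb800 K by simp
    have "fps_nth (qj_fps ^ R) d \<le> (1 + K * y) ^ R / y ^ d"
      using True ypos G K by (intro coeff_bound2[where xa="1/800"]) auto
    also have "1 + K * y = real R / real m" unfolding y_def using K mpos Rr by (simp add: field_simps)
    also have "(real R / real m) ^ R / y ^ d = K^d * real R ^ R / (real m ^ m * real d ^ d)"
    proof -
      have "real m ^ R = real m ^ m * real m ^ d" unfolding R_def by (simp add: power_add)
      then show ?thesis unfolding y_def using K mpos dpos
        by (simp add: power_divide power_mult_distrib field_simps)
    qed
    finally show ?thesis .
  next
    case False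
    define x1 :: real where "x1 = 1/800"
    define B where "B = Gb x1"
    have Bpos: "0 < B" unfolding B_def x1_def by (intro Gb_pos) auto
    have cb: "fps_nth (qj_fps ^ R) d \<le> B ^ R / x1 ^ d"
      unfolding B_def x1_def by (intro coeff_bound) auto
    show ?thesis
    proof (cases "fps_nth (qj_fps ^ R) d \<le> 0")
      case True then show ?thesis using Tpos by linarith
    next
      case cpos: False
      have p: "K*x1/(1+K*x1) = K/(800+K)" unfolding x1_def using K by (simp add: field_simps)
      have lo: "K/(800+K) < real d / real R"
      proof -
        have "real d > K * x1 * real m" using False unfolding y_def x1_def using K mpos
          by (simp add: field_simps)
        then show ?thesis using K mpos dpos Rr unfolding x1_def by (simp add: field_simps)
      qed
      have hi: "real d / real R < K / 1728"
      proof -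
        have "cconst * real R < real m" using c unfolding R_def by simp
        then have "exp (2*pi) * real R < 1728 * real m" unfolding cconst_def by simp
        then show ?thesis unfolding K_def using Rr mpos dpos by (simp add: field_simps)
      qed
      have sq: "(real d / real R - K/(800+K))^2 \<le> (K/1728 - K/(800+K))^2"
        using lo hi by (intro power_mono) auto
      have pp: "0 < (K/(800+K)) * (1 - K/(800+K))"
      proof (intro mult_pos_pos)
        show "0 < K/(800+K)" using K by simp
        show "0 < 1 - K/(800+K)" using K by (simp add: divide_less_eq)
      qed
      have hQ: "(real d / (real m + real d) - K*x1/(1+K*x1))^2 / ((K*x1/(1+K*x1)) * (1 - K*x1/(1+K*x1))) \<le> 41/1000"
      proof -
        have "(real d / (real m + real d) - K*x1/(1+K*x1))^2 / ((K*x1/(1+K*x1)) * (1 - K*x1/(1+K*x1)))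
              \<le> (K/1728 - K/(800+K))^2 / ((K/(800+K)) * (1 - K/(800+K)))"
          unfolding p Rr[symmetric] using sq pp by (intro divide_right_mono) auto
        also have "\<dots> \<le> 41/1000" by (rule Q_bound[OF K])
        finally show ?thesis .
      qed
      have hB: "B \<le> (1 - 41/1000) * (1 + K*x1)"
        using Gb800 K unfolding B_def x1_def by simp
      have klr: "(real m + real d) * ln B - real d * ln x1
          \<le> real d * ln K + (real m + real d) * ln (real m + real d) - real m * ln (real m) - real d * ln (real d)"
        using kl[of "real m" "real d" K "1/800" B "41/1000"] mpos dpos K Bpos hQ hB unfolding x1_def by auto
      have "ln (fps_nth (qj_fps ^ R) d) \<le> ln (B ^ R / x1 ^ d)"
        using cb cpos Bpos unfolding x1_def by simp
      also have "ln (B ^ R / x1 ^ d) = real R * ln B - real d * ln x1"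
        using Bpos unfolding x1_def by (simp add: ln_divide_pos ln_realpow)
      also have "\<dots> \<le> ln (K^d * real R ^ R / (real m ^ m * real d ^ d))"
        using klr K mpos dpos Rr by (simp add: ln_divide_pos ln_mult_pos ln_realpow)
      finally show ?thesis using cpos Tpos by simp
    qed
  qed
  then show ?thesis unfolding K_def R_def .
qed



lemma jensen_pow:
  fixes f :: "nat \<Rightarrow> nat" and s :: nat
  assumes s: "s \<ge> 1" and f: "\<And>r. r < s \<Longrightarrow> f r \<ge> 1"
  shows "(real (\<Sum>r<s. f r) / real s) ^ (\<Sum>r<s. f r) \<le> (\<Prod>r<s. real (f r) ^ f r)"
proof -
  define u where "u = (\<Sum>r<s. f r)"
  have "s \<le> u" unfolding u_def using f card_lessThan[of s] sum_mono[of "{..<s}" "\<lambda>_. 1::nat" f] by auto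
  then have upos: "real u > 0" using s by simp
  have spos: "real s > 0" using s by simp
  have fpos: "\<And>r. r < s \<Longrightarrow> real (f r) > 0" using f by (metis of_nat_0_less_iff less_le_trans zero_less_one)
  have each: "real (f r) - real u / real s \<le> real (f r) * ln (real (f r)) - real (f r) * ln (real u / real s)"
    if r: "r < s" for r
  proof -
    have fp: "real (f r) > 0" using fpos r .
    have "ln (real u / (real (f r) * real s)) \<le> real u / (real (f r) * real s) - 1"
      using upos spos fp by (intro ln_le_minus_one) auto
    moreover have "ln (real u / (real (f r) * real s)) = ln (real u / real s) - ln (real (f r))"
      using upos spos fp by (simp add: ln_divide_pos ln_mult_pos)
    ultimately have "ln (real u / real s) - ln (real (f r)) \<le> real u / (real (f r) * real s) - 1" by simp
    then have "real (f r) * (ln (real u / real s) - ln (real (f r))) \<le> real (f r) * (real u / (real (f r) * real s) - 1)"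
      using fp by (intro mult_left_mono) auto
    also have "\<dots> = real u / real s - real (f r)" using fp spos by (simp add: field_simps)
    finally show ?thesis by (simp add: algebra_simps)
  qed
  have "(\<Sum>r<s. real (f r) - real u / real s) \<le> (\<Sum>r<s. real (f r) * ln (real (f r)) - real (f r) * ln (real u / real s))"
    using each by (intro sum_mono) auto
  moreover have "(\<Sum>r<s. real (f r) - real u / real s) = 0"
    using spos unfolding u_def by (simp add: sum_subtractf)
  moreover have "(\<Sum>r<s. real (f r) * ln (real (f r)) - real (f r) * ln (real u / real s))
       = (\<Sum>r<s. real (f r) * ln (real (f r))) - real u * ln (real u / real s)"
    unfolding u_def by (simp add: sum_subtractf sum_distrib_right)
  ultimately have key: "real u * ln (real u / real s) \<le> (\<Sum>r<s. real (f r) * ln (real (f r)))" by linarith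
  have "ln ((real u / real s) ^ u) = real u * ln (real u / real s)" by (simp add: ln_realpow)
  also have "\<dots> \<le> (\<Sum>r<s. real (f r) * ln (real (f r)))" by (rule key)
  also have "\<dots> = ln (\<Prod>r<s. real (f r) ^ f r)"
    using fpos by (subst ln_prod) (auto simp: ln_realpow)
  finally have "ln ((real u / real s) ^ u) \<le> ln (\<Prod>r<s. real (f r) ^ f r)" .
  moreover have "0 < (real u / real s) ^ u" using upos spos by simp
  moreover have "0 < (\<Prod>r<s. real (f r) ^ f r)" using fpos by (intro prod_pos) auto
  ultimately show ?thesis unfolding u_def by simp
qed

lemma t2p_bound:
  fixes a u s :: nat
  assumes "1 \<le> u" "u \<le> a" "1 \<le> s"
  shows "(3300 * real a * real s / real u) ^ u \<le> (2393 * real s) ^ a * 1.45 ^ u"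
proof -
  have upos: "real u > 0" using assms by simp
  have "(real a / real u) ^ u \<le> exp (real a - real u)"
  proof -
    have "real a / real u = 1 + (real a - real u) / real u" using upos by (simp add: field_simps)
    also have "\<dots> \<le> exp ((real a - real u) / real u)" by (rule exp_ge_add_one_self)
    finally have "(real a / real u) ^ u \<le> exp ((real a - real u) / real u) ^ u"
      using upos by (intro power_mono) auto
    also have "\<dots> = exp (real a - real u)" using upos by (simp add: exp_of_nat_mult[symmetric])
    finally show ?thesis .
  qed
  also have "exp (real a - real u) = exp 1 ^ (a - u)"
    using assms by (simp add: exp_of_nat_mult[symmetric] of_nat_diff)
  also have "\<dots> \<le> 2393 ^ (a - u)" using exp_le by (intro power_mono) auto
  finally have au: "(real a / real u) ^ u \<le> 2393 ^ (a - u)" .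
  have su: "real s ^ u \<le> real s ^ a" using assms by (intro power_increasing) auto
  have "(3300 * real a * real s / real u) ^ u = 3300 ^ u * real s ^ u * (real a / real u) ^ u"
    by (simp add: power_mult_distrib power_divide)
  also have "\<dots> \<le> (2393 * 1.45) ^ u * real s ^ a * 2393 ^ (a - u)"
    using au su by (intro mult_mono power_mono) auto
  also have "\<dots> = (2393 * real s) ^ a * 1.45 ^ u"
  proof -
    have "(2393::real) ^ u * 2393 ^ (a - u) = 2393 ^ a" using assms by (simp add: power_add[symmetric])
    moreover have "(2393 * 1.45::real) ^ u * real s ^ a * 2393 ^ (a - u) = 1.45 ^ u * real s ^ a * (2393 ^ u * 2393 ^ (a - u))"
      by (simp only: power_mult_distrib mult_ac)
    ultimately show ?thesis by (simp only: power_mult_distrib mult_ac)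
  qed
  finally show ?thesis .
qed



theorem mainTheorem15:
  fixes D i j :: int and s :: nat and ii :: "nat \<Rightarrow> int"
  assumes "0 \<le> i" and "i < j" and "j \<le> D" and "s \<ge> 1"
    and "ii s = D - j" and "ii 0 = D - i"
    and "\<forall>r<s. ii (Suc r) < ii r"
  shows "(\<Prod>r<s. jcoeff (nat (ii r)) (- ii (Suc r)))
            \<le> Max {T1 D i j s, T2 D i j s, T2' D i j s, T3 D i j s, T3' D i j s, T4 D i j s}
         \<and> (real_of_int (D - j) > cconst * real_of_int (D - i) \<longrightarrow>
           (\<Prod>r<s. jcoeff (nat (ii r)) (- ii (Suc r))) \<le> T1 D i j s)
         \<and> ((\<Prod>r<s. jcoeff (nat (ii r)) (- ii (Suc r)))
            \<le> max (T1 D i j s) ((5849 * real s) ^ nat (D - i) * 1.5 ^ nat (D - j)))"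
proof -
  define a where "a = nat (D - i)"
  define b where "b = nat (D - j)"
  define u where "u = nat (j - i)"
  define I where "I r = nat (ii r)" for r
  define dd where "dd r = I r - I (Suc r)" for r
  define P where "P = (\<Prod>r<s. jcoeff (nat (ii r)) (- ii (Suc r)))"
  have dec: "\<And>r. r < s \<Longrightarrow> ii (Suc r) < ii r" using assms(7) by auto
  have mono: "ii s \<le> ii r" if "r \<le> s" for r
    using that
  proof (induction r rule: inc_induct)
    case base then show ?case by simp
  next
    case (step n) then show ?case using dec[of n] by linarith
  qed
  have mono0: "ii r \<le> ii 0" if "r \<le> s" for r
    using that
  proof (induction r)
    case 0 then show ?case by simp
  next
    case (Suc r) then show ?case using dec[of r] by linarith
  qed
  have iinn: "ii s \<le> ii r" "0 \<le> ii r" "ii r \<le> D - i" if "r \<le> s" for r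
    using mono[OF that] mono0[OF that] assms by auto
  have Iint: "int (I r) = ii r" if "r \<le> s" for r using iinn[OF that] unfolding I_def by simp
  have ddint: "int (dd r) = ii r - ii (Suc r)" if "r < s" for r
    using Iint[of r] Iint[of "Suc r"] dec[OF that] that unfolding dd_def by simp
  have dd1: "1 \<le> dd r" if "r < s" for r using ddint[OF that] dec[OF that] by simp
  have Isplit: "I r = I (Suc r) + dd r" if "r < s" for r
    using Iint[of r] Iint[of "Suc r"] ddint[OF that] that by simp
  have ab: "I 0 = a" "I s = b" unfolding I_def a_def b_def using assms by auto
  have Ib: "b \<le> I r" if "r \<le> s" for r using iinn[OF that] Iint[OF that] unfolding b_def using assms by simp
  have Ia: "I r \<le> a" if "r \<le> s" for r using iinn[OF that] Iint[OF that] unfolding a_def by simp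
  have jc: "jcoeff (nat (ii r)) (- ii (Suc r)) = fps_nth (qj_fps ^ I r) (dd r)" if "r < s" for r
  proof -
    have "- ii (Suc r) + int (nat (ii r)) = int (dd r)"
      using ddint[OF that] iinn[of r] that by simp
    then show ?thesis unfolding jcoeff_def I_def[symmetric] by simp
  qed
  have jcnn: "0 \<le> fps_nth (qj_fps ^ I r) (dd r)" for r
    using nonneg_power[OF nonneg_qj] unfolding nonneg_def by blast
  have sumd: "(\<Sum>r<s. dd r) = u"
  proof -
    have "int (\<Sum>r<s. dd r) = (\<Sum>r<s. ii r - ii (Suc r))"
      unfolding of_nat_sum using ddint by (intro sum.cong) auto
    also have "\<dots> = ii 0 - ii s" by (rule sum_lessThan_telescope')
    finally have h: "int (\<Sum>r<s. dd r) = j - i" using assms by simp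
    show ?thesis unfolding u_def using h by (metis nat_int)
  qed
  have u1: "1 \<le> u" and ua: "u \<le> a" and aub: "a = u + b"
    unfolding u_def a_def b_def using assms by auto
  have Pdef: "P = (\<Prod>r<s. fps_nth (qj_fps ^ I r) (dd r))"
    unfolding P_def using jc by (intro prod.cong) auto
  have jen: "(real u / real s) ^ u \<le> (\<Prod>r<s. real (dd r) ^ dd r)"
    using jensen_pow[of s dd] dd1 assms(4) unfolding sumd by auto
  have jenpos: "0 < (real u / real s) ^ u" using u1 assms(4) by simp
  have prodd: "0 < (\<Prod>r<s. real (dd r) ^ dd r)" using dd1 by (intro prod_pos) (auto intro!: zero_less_power)
  have PA: "P \<le> (2393 * real s) ^ a * 1.45 ^ u"
  proof -
    have "P \<le> (\<Prod>r<s. (3300 * real a / real (dd r)) ^ dd r)"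
      unfolding Pdef
    proof (intro prod_mono conjI jcnn)
      fix r assume r: "r \<in> {..<s}"
      have "fps_nth (qj_fps ^ I r) (dd r) \<le> (3300 * real (I r) / real (dd r)) ^ dd r"
        using dd1[of r] Isplit[of r] r by (intro stepA) auto
      also have "\<dots> \<le> (3300 * real a / real (dd r)) ^ dd r"
        using Ia[of r] r by (intro power_mono divide_right_mono) auto
      finally show "fps_nth (qj_fps ^ I r) (dd r) \<le> (3300 * real a / real (dd r)) ^ dd r" .
    qed
    also have "\<dots> = (3300 * real a) ^ u / (\<Prod>r<s. real (dd r) ^ dd r)"
      unfolding sumd[symmetric] by (simp add: power_divide prod_dividef power_sum)
    also have "\<dots> \<le> (3300 * real a) ^ u / (real u / real s) ^ u"
      using jen jenpos by (intro divide_left_mono) auto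
    also have "\<dots> = (3300 * real a * real s / real u) ^ u"
      using u1 assms(4) by (simp add: power_divide power_mult_distrib)
    also have "\<dots> \<le> (2393 * real s) ^ a * 1.45 ^ u"
      using u1 ua assms(4) by (intro t2p_bound) auto
    finally show ?thesis .
  qed
  have T2'eq: "T2' D i j s = (2393 * real s) ^ a * 1.45 ^ u"
    unfolding T2'_def a_def u_def ..
  have C1: "P \<le> Max {T1 D i j s, T2 D i j s, T2' D i j s, T3 D i j s, T3' D i j s, T4 D i j s}"
  proof -
    have "T2' D i j s \<le> Max {T1 D i j s, T2 D i j s, T2' D i j s, T3 D i j s, T3' D i j s, T4 D i j s}"
      by (intro Max_ge) auto
    then show ?thesis using PA T2'eq by linarith
  qed
  have C3: "P \<le> max (T1 D i j s) ((5849 * real s) ^ nat (D - i) * 1.5 ^ nat (D - j))"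
  proof -
    have "(2393 * real s) ^ a * 1.45 ^ u \<le> (2393 * real s) ^ a * 1.45 ^ a"
      using ua assms(4) by (intro mult_left_mono power_increasing) auto
    also have "\<dots> = (2393 * real s * 1.45) ^ a" by (simp only: power_mult_distrib)
    also have "\<dots> \<le> (5849 * real s) ^ a" by (intro power_mono) auto
    also have "\<dots> \<le> (5849 * real s) ^ a * 1.5 ^ b"
    proof -
      have "0 \<le> (5849 * real s) ^ a" by simp
      moreover have "(1::real) \<le> 1.5 ^ b" by (rule one_le_power) simp
      ultimately show ?thesis by (metis mult_left_mono mult.right_neutral)
    qed
    finally show ?thesis using PA unfolding a_def b_def by linarith
  qed
  have C2: "P \<le> T1 D i j s" if h: "real_of_int (D - j) > cconst * real_of_int (D - i)"
  proof -
    define K where "K = 1728 - exp (2*pi)"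
    have Kpos: "K > 0" using K_bounds unfolding K_def by auto
    have cpos: "cconst > 0" unfolding cconst_def by simp
    have hb: "real b > cconst * real a" using h assms unfolding a_def b_def by simp
    have "0 \<le> cconst * real a" using cpos by simp
    then have "real b > 0" using hb by linarith
    then have b1: "1 \<le> b" by simp
    define g where "g r = real (I r) ^ I r" for r
    have gnz: "g r \<noteq> 0" if "r \<le> s" for r using Ib[OF that] b1 unfolding g_def by simp
    have "P \<le> (\<Prod>r<s. K ^ dd r * (g r / g (Suc r)) / real (dd r) ^ dd r)"
      unfolding Pdef
    proof (intro prod_mono conjI jcnn)
      fix r assume r: "r \<in> {..<s}"
      define m where "m = I (Suc r)"
      have m1: "1 \<le> m" using Ib[of "Suc r"] b1 r unfolding m_def by auto
      have Ir: "I r = m + dd r" using Isplit[of r] r unfolding m_def by auto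
      have "cconst * real (m + dd r) < real m"
      proof -
        have "cconst * real (m + dd r) \<le> cconst * real a"
          using Ia[of r] r Ir cpos by (intro mult_left_mono) auto
        also have "\<dots> < real b" by (rule hb)
        also have "\<dots> \<le> real m" using Ib[of "Suc r"] r unfolding m_def by simp
        finally show ?thesis .
      qed
      then have "fps_nth (qj_fps ^ (m + dd r)) (dd r)
           \<le> K ^ dd r * real (m + dd r) ^ (m + dd r) / (real m ^ m * real (dd r) ^ dd r)"
        unfolding K_def using m1 dd1[of r] r by (intro stepB) auto
      also have "\<dots> = K ^ dd r * (g r / g (Suc r)) / real (dd r) ^ dd r"
        unfolding g_def m_def[symmetric] Ir[symmetric] by (simp add: field_simps)
      finally show "fps_nth (qj_fps ^ I r) (dd r) \<le> K ^ dd r * (g r / g (Suc r)) / real (dd r) ^ dd r"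
        unfolding Ir .
    qed
    also have "\<dots> = K ^ u * (\<Prod>r<s. g r / g (Suc r)) / (\<Prod>r<s. real (dd r) ^ dd r)"
      unfolding sumd[symmetric] by (simp add: prod_dividef prod.distrib power_sum)
    also have "(\<Prod>r<s. g r / g (Suc r)) = g 0 / g s"
      using gnz by (intro prod_lessThan_telescope') auto
    also have "K ^ u * (g 0 / g s) / (\<Prod>r<s. real (dd r) ^ dd r) \<le> K ^ u * (g 0 / g s) / (real u / real s) ^ u"
    proof (intro divide_left_mono jen)
      show "0 \<le> K ^ u * (g 0 / g s)" using Kpos unfolding g_def by simp
      show "0 < (\<Prod>r<s. real (dd r) ^ dd r) * (real u / real s) ^ u" using prodd jenpos by simp
    qed
    also have "\<dots> = T1 D i j s"
    proof -
      have e: "real_of_int (D - i) = real a" "real_of_int (D - j) = real b" "real_of_int (j - i) = real u"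
        "nat (D - i) = a" "nat (D - j) = b" "nat (j - i) = u"
        unfolding a_def b_def u_def using assms by auto
      show ?thesis unfolding T1_def e K_def[symmetric] g_def ab
        using u1 assms(4) b1 by (simp add: field_simps power_divide)
    qed
    finally show ?thesis .
  qed
  show ?thesis using C1 C2 C3 unfolding P_def by blast
qed


end
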